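(* Let $\mathcal I$ index a finite set of strategies for the iterated Prisoner's Dilemma. Suppose that the strategy indexed by $i^*\in\mathcal I$ consists of a good memory-one strategy vector $\mathbf p^{i^*}$ together with initial cooperation, and that for no other $j\in\mathcal I$ is the strategy vector $\mathbf p^j$ agreeable. Then $i^*$ is an evolutionarily stable strategy for the game $\{A_{ij}:i,j\in\mathcal I\}$, and the vertex $v(i^* )$ is an attractor (a locally asymptotically stable equilibrium) of the replicator dynamics.
   Context: Iterated Prisoner's Dilemma: payoffs $T>R>P>S$ with $2R>T+S$; outcomes ordered $cc,cd,dc,dd$ (first letter X's play, second Y's; $c$ = cooperate, $d$ = defect); payoff vectors $\mathbf S_X=(R,S,T,P)$, $\mathbf S_Y=(R,T,S,P)$. A memory-one strategy vector is $\mathbf p\in[0,1]^4$, $p_i$ being the probability of playing $c$ after the $i$-th outcome, where outcomes are labeled from the player's own perspective (own play first); it is agreeable if $p_1=1$. A strategy is such a vector together with an initial play (probability of $c$ in round one). For a strategy pattern of the opponent (any possibly random, history-dependent rule), a limit distribution is a limit point $\mathbf v$ of the Cesàro averages of the round-$n$ outcome distributions, with payoffs $s_X=\langle\mathbf v\cdot\mathbf S_X\rangle$, $s_Y=\langle\mathbf v\cdot\mathbf S_Y\rangle$. A memory-one $\mathbf p$ for X is good if it is agreeable and for every strategy pattern of Y and every associated limit distribution $s_Y\ge R$ implies $s_Y=s_X=R$. For $i,j\in\mathcal I$, $A_{ij}$ is the long-run average payoff $s_X$ of X when X uses strategy $i$ and Y uses strategy $j$ (the Cesàro limit exists). Replicator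 dynamics: on the simplex $\Delta=\{\pi\in\mathbb R^{\mathcal I}:\pi_i\ge0,\sum\pi_i=1\}$, $\frac{d\pi_i}{dt}=\pi_i(A_{i\pi}-A_{\pi\pi})$ with $A_{i\pi}=\sum_j\pi_jA_{ij}$, $A_{\pi\pi}=\sum_i\pi_iA_{i\pi}$; $v(i)$ is the vertex with $\pi_i=1$. $i^*$ is an evolutionarily stable strategy (ESS) if $A_{ji^*}<A_{i^*i^*}$ for all $j\neq i^*$. *)

theory Defs
  imports "HOL-Analysis.Analysis"
begin

text \<open>Outcomes in the order cc, cd, dc, dd (first letter: X's play, second: Y's).\<close>
datatype outcome = CC | CD | DC | DD

lemma UNIV_outcome: "(UNIV :: outcome set) = {CC, CD, DC, DD}"
  using outcome.exhaust by auto

instance outcome :: finite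
  by standard (simp add: UNIV_outcome)

fun xcoop :: "outcome \<Rightarrow> bool" where
  "xcoop CC = True" | "xcoop CD = True" | "xcoop DC = False" | "xcoop DD = False"

fun ycoop :: "outcome \<Rightarrow> bool" where
  "ycoop CC = True" | "ycoop CD = False" | "ycoop DC = True" | "ycoop DD = False"

fun swap_outcome :: "outcome \<Rightarrow> outcome" where
  "swap_outcome CC = CC" | "swap_outcome CD = DC" | "swap_outcome DC = CD" | "swap_outcome DD = DD"

fun SX :: "real \<Rightarrow> real \<Rightarrow> real \<Rightarrow> real \<Rightarrow> outcome \<Rightarrow> real" where
  "SX T R P S CC = R" | "SX T R P S CD = S" | "SX T R P S DC = T" | "SX T R P S DD = P"

fun SY :: "real \<Rightarrow> real \<Rightarrow> real \<Rightarrow> real \<Rightarrow> outcome \<Rightarrow> real" where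
  "SY T R P S CC = R" | "SY T R P S CD = T" | "SY T R P S DC = S" | "SY T R P S DD = P"

definition PD_payoffs :: "real \<Rightarrow> real \<Rightarrow> real \<Rightarrow> real \<Rightarrow> bool" where
  "PD_payoffs T R P S \<longleftrightarrow> T > R \<and> R > P \<and> P > S \<and> 2 * R > T + S"

text \<open>Memory-one strategy vectors: p w = probability of cooperating after outcome w
  (labelled from the player's own perspective).\<close>
definition memory_one :: "(outcome \<Rightarrow> real) \<Rightarrow> bool" where
  "memory_one p \<longleftrightarrow> (\<forall>w. 0 \<le> p w \<and> p w \<le> 1)"

definition agreeable :: "(outcome \<Rightarrow> real) \<Rightarrow> bool" where
  "agreeable p \<longleftrightarrow> p CC = 1"

text \<open>A strategy pattern for Y: a (behavioural) history-dependent random rule, giving the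
  probability that Y cooperates after a given history.  Histories are lists of outcomes
  (X's perspective), most recent outcome first.\<close>
definition strategy_pattern :: "(outcome list \<Rightarrow> real) \<Rightarrow> bool" where
  "strategy_pattern \<sigma> \<longleftrightarrow> (\<forall>h. 0 \<le> \<sigma> h \<and> \<sigma> h \<le> 1)"

definition prob_play :: "real \<Rightarrow> bool \<Rightarrow> real" where
  "prob_play q c = (if c then q else 1 - q)"

definition mem1_coop :: "(outcome \<Rightarrow> real) \<Rightarrow> real \<Rightarrow> outcome list \<Rightarrow> real" where
  "mem1_coop p x0 h = (case h of [] \<Rightarrow> x0 | w # _ \<Rightarrow> p w)"

text \<open>The pattern of a memory-one strategy (q, y0) used by Y: Y labels outcomes from its
  own perspective, hence the swap.\<close>
definition mem1_pattern :: "(outcome \<Rightarrow> real) \<Rightarrow> real \<Rightarrow> outcome list \<Rightarrow> real" where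
  "mem1_pattern q y0 h = (case h of [] \<Rightarrow> y0 | w # _ \<Rightarrow> q (swap_outcome w))"

fun hist_prob :: "(outcome \<Rightarrow> real) \<Rightarrow> real \<Rightarrow> (outcome list \<Rightarrow> real) \<Rightarrow> outcome list \<Rightarrow> real" where
  "hist_prob p x0 \<sigma> [] = 1"
| "hist_prob p x0 \<sigma> (w # h) =
     hist_prob p x0 \<sigma> h * prob_play (mem1_coop p x0 h) (xcoop w) * prob_play (\<sigma> h) (ycoop w)"

text \<open>Outcome distribution of round n+1 (n = number of previous rounds).\<close>
definition round_dist :: "(outcome \<Rightarrow> real) \<Rightarrow> real \<Rightarrow> (outcome list \<Rightarrow> real) \<Rightarrow> nat \<Rightarrow> outcome \<Rightarrow> real" where
  "round_dist p x0 \<sigma> n w = (\<Sum>h\<in>{h. length h = n}. hist_prob p x0 \<sigma> (w # h))"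

definition cesaro_dist :: "(outcome \<Rightarrow> real) \<Rightarrow> real \<Rightarrow> (outcome list \<Rightarrow> real) \<Rightarrow> nat \<Rightarrow> outcome \<Rightarrow> real" where
  "cesaro_dist p x0 \<sigma> N w = (\<Sum>n<N. round_dist p x0 \<sigma> n w) / real N"

definition limit_dist :: "(outcome \<Rightarrow> real) \<Rightarrow> real \<Rightarrow> (outcome list \<Rightarrow> real) \<Rightarrow> (outcome \<Rightarrow> real) \<Rightarrow> bool" where
  "limit_dist p x0 \<sigma> v \<longleftrightarrow>
     (\<exists>r. strict_mono r \<and> (\<forall>w. (\<lambda>k. cesaro_dist p x0 \<sigma> (r k) w) \<longlonglongrightarrow> v w))"

definition sX :: "real \<Rightarrow> real \<Rightarrow> real \<Rightarrow> real \<Rightarrow> (outcome \<Rightarrow> real) \<Rightarrow> real" where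
  "sX T R P S v = (\<Sum>w\<in>UNIV. v w * SX T R P S w)"

definition sY :: "real \<Rightarrow> real \<Rightarrow> real \<Rightarrow> real \<Rightarrow> (outcome \<Rightarrow> real) \<Rightarrow> real" where
  "sY T R P S v = (\<Sum>w\<in>UNIV. v w * SY T R P S w)"

definition good :: "real \<Rightarrow> real \<Rightarrow> real \<Rightarrow> real \<Rightarrow> (outcome \<Rightarrow> real) \<Rightarrow> bool" where
  "good T R P S p \<longleftrightarrow> agreeable p \<and>
     (\<forall>x0 \<in> {0..1}. \<forall>\<sigma>. strategy_pattern \<sigma> \<longrightarrow>
        (\<forall>v. limit_dist p x0 \<sigma> v \<longrightarrow> sY T R P S v \<ge> R \<longrightarrow>
               sY T R P S v = R \<and> sX T R P S v = R))"

definition game_matrix ::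
  "real \<Rightarrow> real \<Rightarrow> real \<Rightarrow> real \<Rightarrow> ('i \<Rightarrow> outcome \<Rightarrow> real) \<Rightarrow> ('i \<Rightarrow> real) \<Rightarrow> 'i \<Rightarrow> 'i \<Rightarrow> real" where
  "game_matrix T R P S p x0 i j =
     lim (\<lambda>N. sX T R P S (cesaro_dist (p i) (x0 i) (mem1_pattern (p j) (x0 j)) N))"

definition ESS :: "('i \<Rightarrow> 'i \<Rightarrow> real) \<Rightarrow> 'i \<Rightarrow> bool" where
  "ESS A i\<^sub>0 \<longleftrightarrow> (\<forall>j. j \<noteq> i\<^sub>0 \<longrightarrow> A j i\<^sub>0 < A i\<^sub>0 i\<^sub>0)"

definition rep_simplex :: "(real ^ 'i::finite) set" where
  "rep_simplex = {\<pi>. (\<forall>i. 0 \<le> \<pi> $ i) \<and> (\<Sum>i\<in>UNIV. \<pi> $ i) = 1}"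

definition vertex :: "'i::finite \<Rightarrow> real ^ 'i" where
  "vertex i = (\<chi> j. if j = i then 1 else 0)"

definition A_vec :: "('i::finite \<Rightarrow> 'i \<Rightarrow> real) \<Rightarrow> 'i \<Rightarrow> real ^ 'i \<Rightarrow> real" where
  "A_vec A i \<pi> = (\<Sum>j\<in>UNIV. \<pi> $ j * A i j)"

definition A_avg :: "('i::finite \<Rightarrow> 'i \<Rightarrow> real) \<Rightarrow> real ^ 'i \<Rightarrow> real" where
  "A_avg A \<pi> = (\<Sum>i\<in>UNIV. \<pi> $ i * A_vec A i \<pi>)"

definition replicator :: "('i::finite \<Rightarrow> 'i \<Rightarrow> real) \<Rightarrow> real ^ 'i \<Rightarrow> real ^ 'i" where
  "replicator A \<pi> = (\<chi> i. \<pi> $ i * (A_vec A i \<pi> - A_avg A \<pi>))"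

definition replicator_solution :: "('i::finite \<Rightarrow> 'i \<Rightarrow> real) \<Rightarrow> (real \<Rightarrow> real ^ 'i) \<Rightarrow> bool" where
  "replicator_solution A x \<longleftrightarrow>
     (\<forall>t\<ge>0. (x has_vector_derivative replicator A (x t)) (at t within {0..}))"

definition replicator_attractor :: "('i::finite \<Rightarrow> 'i \<Rightarrow> real) \<Rightarrow> real ^ 'i \<Rightarrow> bool" where
  "replicator_attractor A e \<longleftrightarrow>
     e \<in> rep_simplex \<and> replicator A e = 0 \<and>
     (\<forall>\<epsilon>>0. \<exists>\<delta>>0. \<forall>x. replicator_solution A x \<and> x 0 \<in> rep_simplex \<and> dist (x 0) e < \<delta> \<longrightarrow>
        (\<forall>t\<ge>0. dist (x t) e < \<epsilon>)) \<and>
     (\<exists>\<delta>>0. \<forall>x. replicator_solution A x \<and> x 0 \<in> rep_simplex \<and> dist (x 0) e < \<delta> \<longrightarrow>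
        (x \<longlongrightarrow> e) at_top)"

end

theory Submission
  imports Defs
begin



definition stoch :: "real^'n::finite^'n \<Rightarrow> bool" where
  "stoch M \<longleftrightarrow> (\<forall>i j. 0 \<le> M$i$j) \<and> (\<forall>i. (\<Sum>j\<in>UNIV. M$i$j) = 1)"

lemma stoch_le1: assumes "stoch M" shows "M$i$j \<le> 1"
proof -
  have "M$i$j \<le> (\<Sum>j\<in>UNIV. M$i$j)"
    by (rule member_le_sum) (use assms in \<open>auto simp: stoch_def\<close>)
  then show ?thesis using assms by (simp add: stoch_def)
qed

lemma stoch_mult: assumes "stoch A" "stoch B" shows "stoch (A ** B)"
proof -
  have "(\<Sum>j\<in>UNIV. (A ** B)$i$j) = 1" for i
  proof -
    have "(\<Sum>j\<in>UNIV. (A ** B)$i$j) = (\<Sum>k\<in>UNIV. A$i$k * (\<Sum>j\<in>UNIV. B$k$j))"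
      unfolding matrix_matrix_mult_def by (simp add: sum_distrib_left) (rule sum.swap)
    also have "\<dots> = 1" using assms by (simp add: stoch_def)
    finally show ?thesis .
  qed
  moreover have "0 \<le> (A ** B)$i$j" for i j
    using assms by (auto simp: matrix_matrix_mult_def stoch_def intro!: sum_nonneg)
  ultimately show ?thesis by (simp add: stoch_def)
qed

primrec mpow :: "real^'n::finite^'n \<Rightarrow> nat \<Rightarrow> real^'n^'n" where
  "mpow M 0 = mat 1"
| "mpow M (Suc n) = mpow M n ** M"

lemma stoch_mat1: "stoch (mat 1 :: real^'n::finite^'n)"
  by (simp add: stoch_def mat_def)

lemma stoch_mpow: "stoch M \<Longrightarrow> stoch (mpow M n)"
  by (induction n) (auto simp: stoch_mat1 stoch_mult)

lemma mpow_comm: "M ** mpow M n = mpow M n ** M"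
  by (induction n) (simp_all add: matrix_mul_assoc)

definition cmat :: "real^'n::finite^'n \<Rightarrow> nat \<Rightarrow> real^'n^'n" where
  "cmat M N = (\<chi> i j. (\<Sum>n<N. mpow M n $ i $ j) / real N)"

lemma cmat_bounds: assumes "stoch M" shows "0 \<le> cmat M N $ i $ j" "cmat M N $ i $ j \<le> 1"
proof -
  have b: "0 \<le> mpow M n $ i $ j" "mpow M n $ i $ j \<le> 1" for n
    using stoch_mpow[OF assms, of n] stoch_le1[of "mpow M n"] by (auto simp: stoch_def)
  show "0 \<le> cmat M N $ i $ j" using b by (auto simp: cmat_def intro!: sum_nonneg divide_nonneg_nonneg)
  have "(\<Sum>n<N. mpow M n $ i $ j) \<le> (\<Sum>n<N. 1)" by (rule sum_mono) (use b in auto)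
  then show "cmat M N $ i $ j \<le> 1"
    by (cases "N = 0") (auto simp: cmat_def divide_le_eq)
qed

lemma cmat_bounded: fixes M :: "real^'n::finite^'n" assumes "stoch M" shows "bounded (range (cmat M))"
proof -
  have "norm (cmat M N) \<le> real (CARD('n)) * real (CARD('n))" for N
  proof -
    have "norm (cmat M N) \<le> (\<Sum>i\<in>UNIV. norm (cmat M N $ i))"
      unfolding norm_vec_def by (rule L2_set_le_sum) simp
    also have "\<dots> \<le> (\<Sum>i\<in>(UNIV::'n set). real (CARD('n)))"
    proof (rule sum_mono)
      fix i
      have "norm (cmat M N $ i) \<le> (\<Sum>j\<in>UNIV. \<bar>cmat M N $ i $ j\<bar>)" by (rule norm_le_l1_cart)
      also have "\<dots> \<le> (\<Sum>j\<in>(UNIV::'n set). 1)"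
        by (rule sum_mono) (use cmat_bounds[OF assms, of N i] in auto)
      finally show "norm (cmat M N $ i) \<le> real (CARD('n))" by simp
    qed
    finally show ?thesis by simp
  qed
  then show ?thesis by (auto simp: bounded_iff)
qed

lemma tendsto_mmult:
  fixes X Y :: "'a \<Rightarrow> real^'n::finite^'n"
  assumes "(X \<longlongrightarrow> A) F" "(Y \<longlongrightarrow> B) F"
  shows "((\<lambda>k. X k ** Y k) \<longlongrightarrow> A ** B) F"
  unfolding matrix_matrix_mult_def
  by (intro vec_tendstoI) (simp, intro tendsto_intros tendsto_vec_nth assms)

lemma cmat_mult_r: "(cmat M N ** B) $ i $ j = (\<Sum>n<N. (mpow M n ** B) $ i $ j) / real N"
proof -
  have "(cmat M N ** B) $ i $ j = (\<Sum>k\<in>UNIV. \<Sum>n<N. mpow M n $ i $ k * B $ k $ j / real N)"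
    by (simp add: matrix_matrix_mult_def cmat_def sum_divide_distrib sum_distrib_right)
  also have "\<dots> = (\<Sum>n<N. \<Sum>k\<in>UNIV. mpow M n $ i $ k * B $ k $ j / real N)"
    by (rule sum.swap)
  also have "\<dots> = (\<Sum>n<N. (mpow M n ** B) $ i $ j) / real N"
    by (simp add: matrix_matrix_mult_def sum_divide_distrib)
  finally show ?thesis .
qed

lemma cmat_mult_l: "(B ** cmat M N) $ i $ j = (\<Sum>n<N. (B ** mpow M n) $ i $ j) / real N"
proof -
  have "(B ** cmat M N) $ i $ j = (\<Sum>k\<in>UNIV. \<Sum>n<N. B $ i $ k * mpow M n $ k $ j / real N)"
    by (simp add: matrix_matrix_mult_def cmat_def sum_divide_distrib sum_distrib_left)
  also have "\<dots> = (\<Sum>n<N. \<Sum>k\<in>UNIV. B $ i $ k * mpow M n $ k $ j / real N)"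
    by (rule sum.swap)
  also have "\<dots> = (\<Sum>n<N. (B ** mpow M n) $ i $ j) / real N"
    by (simp add: matrix_matrix_mult_def sum_divide_distrib)
  finally show ?thesis .
qed

definition Emat :: "real^'n::finite^'n \<Rightarrow> nat \<Rightarrow> real^'n^'n" where
  "Emat M N = (\<chi> i j. (mpow M N $ i $ j - mat 1 $ i $ j) / real N)"

lemma cmat_right: "cmat M N ** M = cmat M N + Emat M N"
proof -
  have "(cmat M N ** M) $ i $ j = (cmat M N + Emat M N) $ i $ j" for i j
  proof -
    have "(\<Sum>n<N. mpow M (Suc n) $ i $ j) - (\<Sum>n<N. mpow M n $ i $ j) = mpow M N $ i $ j - mpow M 0 $ i $ j"
      using sum_lessThan_telescope[of "\<lambda>n. mpow M n $ i $ j" N] by (simp add: sum_subtractf)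
    then have "(\<Sum>n<N. (mpow M n ** M) $ i $ j) = (\<Sum>n<N. mpow M n $ i $ j) + (mpow M N $ i $ j - mat 1 $ i $ j)"
      by simp
    then show ?thesis
      unfolding cmat_mult_r by (simp add: cmat_def Emat_def add_divide_distrib[symmetric])
  qed
  then show ?thesis by (simp add: vec_eq_iff)
qed

lemma cmat_left: "M ** cmat M N = cmat M N + Emat M N"
proof -
  have "(M ** cmat M N) $ i $ j = (cmat M N ** M) $ i $ j" for i j
    by (simp add: cmat_mult_l cmat_mult_r mpow_comm)
  then show ?thesis using cmat_right by (metis vec_eq_iff)
qed

lemma Emat_tendsto: assumes "stoch M" shows "Emat M \<longlonglongrightarrow> 0"
proof (intro vec_tendstoI)
  fix i j
  have b: "0 \<le> mpow M n $ i $ j" "mpow M n $ i $ j \<le> 1" for n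
    using stoch_mpow[OF assms, of n] stoch_le1[of "mpow M n"] by (auto simp: stoch_def)
  have "(\<lambda>N. (mpow M N $ i $ j - mat 1 $ i $ j) / real N) \<longlonglongrightarrow> 0"
  proof (rule Lim_null_comparison)
    show "\<forall>\<^sub>F N in sequentially. norm ((mpow M N $ i $ j - mat 1 $ i $ j) / real N) \<le> 2 / real N"
    proof (intro always_eventually allI)
      fix N
      have "\<bar>mpow M N $ i $ j - mat 1 $ i $ j\<bar> \<le> 2" using b[of N] by (auto simp: mat_def)
      then show "norm ((mpow M N $ i $ j - mat 1 $ i $ j) / real N) \<le> 2 / real N"
        by (simp add: abs_divide divide_right_mono)
    qed
    show "(\<lambda>N. 2 / real N) \<longlonglongrightarrow> 0"
      using tendsto_mult_right_zero[OF lim_inverse_n', of 2] by (simp add: divide_inverse)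
  qed
  then show "(\<lambda>N. Emat M N $ i $ j) \<longlonglongrightarrow> 0 $ i $ j" by (simp add: Emat_def)
qed

lemma unique_limpt_conv:
  fixes X :: "nat \<Rightarrow> 'a::heine_borel"
  assumes bd: "bounded (range X)"
    and uq: "\<And>r Q. strict_mono r \<Longrightarrow> (X \<circ> r) \<longlonglongrightarrow> Q \<Longrightarrow> Q = L"
  shows "X \<longlonglongrightarrow> L"
proof (rule ccontr)
  assume "\<not> X \<longlonglongrightarrow> L"
  then obtain e where e: "e > 0" "\<not> (\<forall>\<^sub>F n in sequentially. dist (X n) L < e)"
    unfolding tendsto_iff by blast
  then have "\<exists>\<^sub>F n in sequentially. \<not> dist (X n) L < e" by (simp add: not_eventually)
  then have "infinite {n. \<not> dist (X n) L < e}"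
    by (simp add: frequently_cofinite[symmetric] cofinite_eq_sequentially)
  then obtain r :: "nat \<Rightarrow> nat" where r: "strict_mono r" "\<And>n. r n \<in> {n. \<not> dist (X n) L < e}"
    using infinite_enumerate by blast
  have "bounded (range (X \<circ> r))" using bd by (rule bounded_subset) auto
  then obtain Q r2 where r2: "strict_mono r2" "((X \<circ> r) \<circ> r2) \<longlonglongrightarrow> Q"
    using bounded_imp_convergent_subsequence by blast
  have "strict_mono (r \<circ> r2)" using r(1) r2(1) by (simp add: strict_mono_def)
  moreover have "(X \<circ> (r \<circ> r2)) \<longlonglongrightarrow> Q" using r2(2) by (simp add: o_assoc)
  ultimately have "Q = L" by (rule uq)
  with r2(2) have "((X \<circ> r) \<circ> r2) \<longlonglongrightarrow> L" by simp
  then have "\<forall>\<^sub>F n in sequentially. dist (((X \<circ> r) \<circ> r2) n) L < e" using e(1) tendstoD by blast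
  then obtain n where "dist (X (r (r2 n))) L < e" by (auto simp: eventually_sequentially)
  with r(2)[of "r2 n"] show False by simp
qed

lemma limpt_props:
  assumes M: "stoch M" and r: "strict_mono r" and Q: "(cmat M \<circ> r) \<longlonglongrightarrow> Q"
  shows "Q ** M = Q" "M ** Q = Q"
proof -
  have E: "(\<lambda>k. Emat M (r k)) \<longlonglongrightarrow> 0"
    using LIMSEQ_subseq_LIMSEQ[OF Emat_tendsto[OF M] r] by (simp add: o_def)
  have Q': "(\<lambda>k. cmat M (r k)) \<longlonglongrightarrow> Q" using Q by (simp add: o_def)
  have "(\<lambda>k. cmat M (r k) ** M) \<longlonglongrightarrow> Q ** M" by (rule tendsto_mmult[OF Q' tendsto_const])
  moreover have "(\<lambda>k. cmat M (r k) ** M) \<longlonglongrightarrow> Q + 0"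
    unfolding cmat_right by (intro tendsto_add Q' E)
  ultimately have "Q ** M = Q + 0" by (rule LIMSEQ_unique)
  then show "Q ** M = Q" by simp
  have "(\<lambda>k. M ** cmat M (r k)) \<longlonglongrightarrow> M ** Q" by (rule tendsto_mmult[OF tendsto_const Q'])
  moreover have "(\<lambda>k. M ** cmat M (r k)) \<longlonglongrightarrow> Q + 0"
    unfolding cmat_left by (intro tendsto_add Q' E)
  ultimately have "M ** Q = Q + 0" by (rule LIMSEQ_unique)
  then show "M ** Q = Q" by simp
qed

lemma Q_mpow_r: "Q ** M = Q \<Longrightarrow> Q ** mpow M n = Q"
  by (induction n) (simp_all add: matrix_mul_assoc)

lemma Q_mpow_l: "M ** Q = Q \<Longrightarrow> mpow M n ** Q = Q"
  by (induction n) (simp_all flip: matrix_mul_assoc)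

lemma Q_cmat_r: assumes "Q ** M = Q" "N > 0" shows "Q ** cmat M N = Q"
proof -
  have "(Q ** cmat M N) $ i $ j = Q $ i $ j" for i j
    using assms by (simp add: cmat_mult_l Q_mpow_r)
  then show ?thesis by (simp add: vec_eq_iff)
qed

lemma Q_cmat_l: assumes "M ** Q = Q" "N > 0" shows "cmat M N ** Q = Q"
proof -
  have "(cmat M N ** Q) $ i $ j = Q $ i $ j" for i j
    using assms by (simp add: cmat_mult_r Q_mpow_l)
  then show ?thesis by (simp add: vec_eq_iff)
qed

lemma cmat_converges:
  fixes M :: "real^'n::finite^'n"
  assumes M: "stoch M"
  shows "\<exists>Q. cmat M \<longlonglongrightarrow> Q \<and> Q ** M = Q"
proof -
  obtain Q r where r: "strict_mono r" "(cmat M \<circ> r) \<longlonglongrightarrow> Q"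
    using bounded_imp_convergent_subsequence[OF cmat_bounded[OF M]] by blast
  note QP = limpt_props[OF M r]
  have "cmat M \<longlonglongrightarrow> Q"
  proof (rule unique_limpt_conv[OF cmat_bounded[OF M]])
    fix r' Q' assume r': "strict_mono r'" "(cmat M \<circ> r') \<longlonglongrightarrow> Q'"
    note QP' = limpt_props[OF M r']
    have "r k > 0 \<and> r' k > 0" if "k \<ge> 1" for k
      using seq_suble[OF r(1), of k] seq_suble[OF r'(1), of k] that by linarith
    then have ev: "\<forall>\<^sub>F k in sequentially. r k > 0" "\<forall>\<^sub>F k in sequentially. r' k > 0"
      by (auto simp: eventually_sequentially)
    have "(\<lambda>k. cmat M (r' k) ** Q) \<longlonglongrightarrow> Q' ** Q"
      using r'(2) by (intro tendsto_mmult tendsto_const) (simp add: o_def)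
    moreover have "\<forall>\<^sub>F k in sequentially. cmat M (r' k) ** Q = Q"
      using ev(2) by eventually_elim (simp add: Q_cmat_l QP)
    ultimately have 1: "Q' ** Q = Q"
    proof -
      assume a: "(\<lambda>k. cmat M (r' k) ** Q) \<longlonglongrightarrow> Q' ** Q" "\<forall>\<^sub>F k in sequentially. cmat M (r' k) ** Q = Q"
      have "(\<lambda>k. cmat M (r' k) ** Q) \<longlonglongrightarrow> Q"
        by (rule Lim_transform_eventually[OF tendsto_const]) (use a(2) in \<open>auto elim: eventually_mono\<close>)
      with a(1) show ?thesis using LIMSEQ_unique by blast
    qed
    have "(\<lambda>k. Q' ** cmat M (r k)) \<longlonglongrightarrow> Q' ** Q"
      using r(2) by (intro tendsto_mmult tendsto_const) (simp add: o_def)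
    moreover have "\<forall>\<^sub>F k in sequentially. Q' ** cmat M (r k) = Q'"
      using ev(1) by eventually_elim (simp add: Q_cmat_r QP')
    ultimately have 2: "Q' ** Q = Q'"
    proof -
      assume a: "(\<lambda>k. Q' ** cmat M (r k)) \<longlonglongrightarrow> Q' ** Q" "\<forall>\<^sub>F k in sequentially. Q' ** cmat M (r k) = Q'"
      have "(\<lambda>k. Q' ** cmat M (r k)) \<longlonglongrightarrow> Q'"
        by (rule Lim_transform_eventually[OF tendsto_const]) (use a(2) in \<open>auto elim: eventually_mono\<close>)
      with a(1) show ?thesis using LIMSEQ_unique by blast
    qed
    show "Q' = Q" using 1 2 by simp
  qed
  with QP show ?thesis by blast
qed



definition Mt :: "(outcome \<Rightarrow> real) \<Rightarrow> (outcome \<Rightarrow> real) \<Rightarrow> real^outcome^outcome" where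
  "Mt p q = (\<chi> w w'. prob_play (p w) (xcoop w') * prob_play (q (swap_outcome w)) (ycoop w'))"

definition mu0 :: "real \<Rightarrow> real \<Rightarrow> real^outcome" where
  "mu0 a b = (\<chi> w'. prob_play a (xcoop w') * prob_play b (ycoop w'))"

lemma lists_Suc_eq: "{h::'a list. length h = Suc n} = (\<lambda>(w,h). w # h) ` (UNIV \<times> {h. length h = n})"
  by (auto simp: length_Suc_conv image_iff)

lemma round_dist_0: "round_dist p a \<sigma> 0 w = prob_play a (xcoop w) * prob_play (\<sigma> []) (ycoop w)"
  by (simp add: round_dist_def mem1_coop_def)

lemma round_dist_Suc:
  "round_dist p a (mem1_pattern q b) (Suc n) w' =
     (\<Sum>w\<in>UNIV. round_dist p a (mem1_pattern q b) n w * Mt p q $ w $ w')"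
proof -
  have inj: "inj_on (\<lambda>(w,h). w # h) (UNIV \<times> {h::outcome list. length h = n})"
    by (auto simp: inj_on_def)
  have fin: "finite {h::outcome list. length h = n}"
    using finite_lists_length_eq[of "UNIV::outcome set" n] by simp
  have "round_dist p a (mem1_pattern q b) (Suc n) w' =
     (\<Sum>x\<in>UNIV \<times> {h. length h = n}. hist_prob p a (mem1_pattern q b) (w' # (case x of (w,h) \<Rightarrow> w # h)))"
    unfolding round_dist_def lists_Suc_eq by (subst sum.reindex[OF inj]) (simp add: o_def)
  also have "\<dots> = (\<Sum>w\<in>UNIV. \<Sum>h\<in>{h. length h = n}. hist_prob p a (mem1_pattern q b) (w' # w # h))"
    by (simp add: sum.cartesian_product split_def)
  also have "\<dots> = (\<Sum>w\<in>UNIV. \<Sum>h\<in>{h. length h = n}. hist_prob p a (mem1_pattern q b) (w # h) * Mt p q $ w $ w')"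
    by (simp add: Mt_def mem1_coop_def mem1_pattern_def mult.assoc)
  also have "\<dots> = (\<Sum>w\<in>UNIV. round_dist p a (mem1_pattern q b) n w * Mt p q $ w $ w')"
    by (simp add: round_dist_def sum_distrib_right)
  finally show ?thesis .
qed


definition pdist :: "real^'n::finite \<Rightarrow> bool" where
  "pdist v \<longleftrightarrow> (\<forall>i. 0 \<le> v$i) \<and> (\<Sum>i\<in>UNIV. v$i) = 1"

lemma pdist_mult: assumes "pdist v" "stoch P" shows "pdist (v v* P)"
proof -
  have "(\<Sum>j\<in>UNIV. (v v* P)$j) = (\<Sum>i\<in>UNIV. v$i * (\<Sum>j\<in>UNIV. P$i$j))"
    unfolding vector_matrix_mult_def by (simp add: sum_distrib_left) (rule sum.swap)
  also have "\<dots> = 1" using assms by (simp add: stoch_def pdist_def)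
  finally show ?thesis using assms
    by (auto simp: pdist_def stoch_def vector_matrix_mult_def intro!: sum_nonneg)
qed

lemma prob_play_bounds: "0 \<le> a \<Longrightarrow> a \<le> 1 \<Longrightarrow> 0 \<le> prob_play a c \<and> prob_play a c \<le> 1"
  by (simp add: prob_play_def)

lemma sum_outcome: "(\<Sum>w\<in>UNIV. f w) = f CC + f CD + f DC + (f DD :: real)"
  by (simp add: UNIV_outcome)

lemma stoch_Mt: assumes "memory_one p" "memory_one q" shows "stoch (Mt p q)"
  using assms unfolding stoch_def Mt_def memory_one_def
  by (auto simp: sum_outcome prob_play_def algebra_simps intro!: mult_nonneg_nonneg)

lemma pdist_mu0: assumes "0 \<le> a" "a \<le> 1" "0 \<le> b" "b \<le> 1" shows "pdist (mu0 a b)"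
  using assms unfolding pdist_def mu0_def
  by (auto simp: sum_outcome prob_play_def algebra_simps intro!: mult_nonneg_nonneg)

lemma round_dist_mpow:
  "round_dist p a (mem1_pattern q b) n w = (mu0 a b v* mpow (Mt p q) n) $ w"
proof (induction n arbitrary: w)
  case 0
  then show ?case
    by (simp add: round_dist_0 mu0_def mem1_pattern_def vector_matrix_mult_def mat_def if_distrib cong: if_cong)
next
  case (Suc n)
  then show ?case
    by (simp add: round_dist_Suc flip: vector_matrix_mul_assoc) (simp add: vector_matrix_mult_def mult.commute)
qed

lemma cesaro_cmat:
  "cesaro_dist p a (mem1_pattern q b) N w = (mu0 a b v* cmat (Mt p q) N) $ w"
proof -
  have "(mu0 a b v* cmat (Mt p q) N) $ w = (\<Sum>i\<in>UNIV. \<Sum>n<N. mu0 a b $ i * mpow (Mt p q) n $ i $ w / real N)"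
    by (simp add: vector_matrix_mult_def cmat_def sum_distrib_left sum_divide_distrib)
  also have "\<dots> = (\<Sum>n<N. \<Sum>i\<in>UNIV. mu0 a b $ i * mpow (Mt p q) n $ i $ w / real N)"
    by (rule sum.swap)
  also have "\<dots> = cesaro_dist p a (mem1_pattern q b) N w"
    by (simp add: cesaro_dist_def round_dist_mpow vector_matrix_mult_def sum_divide_distrib)
  finally show ?thesis by simp
qed

lemma stoch_cmat: assumes "stoch M" "N > 0" shows "stoch (cmat M N)"
proof -
  have "(\<Sum>j\<in>UNIV. cmat M N $ i $ j) = 1" for i
  proof -
    have "(\<Sum>j\<in>UNIV. cmat M N $ i $ j) = (\<Sum>n<N. \<Sum>j\<in>UNIV. mpow M n $ i $ j) / real N"
      by (simp add: cmat_def sum_divide_distrib) (rule sum.swap)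
    also have "\<dots> = 1" using stoch_mpow[OF assms(1)] assms(2) by (simp add: stoch_def)
    finally show ?thesis .
  qed
  then show ?thesis using cmat_bounds[OF assms(1)] by (simp add: stoch_def)
qed

lemma stoch_limit:
  assumes "\<forall>\<^sub>F N in sequentially. stoch (X N)" "X \<longlonglongrightarrow> Q"
  shows "stoch (Q :: real^'n::finite^'n)"
proof -
  have "0 \<le> Q $ i $ j" for i j
  proof (rule tendsto_lowerbound)
    show "(\<lambda>N. X N $ i $ j) \<longlonglongrightarrow> Q $ i $ j" by (intro tendsto_vec_nth assms(2))
    show "\<forall>\<^sub>F N in sequentially. 0 \<le> X N $ i $ j" using assms(1) by eventually_elim (simp add: stoch_def)
  qed simp
  moreover have "(\<Sum>j\<in>UNIV. Q $ i $ j) = 1" for i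
  proof -
    have "(\<lambda>N. \<Sum>j\<in>UNIV. X N $ i $ j) \<longlonglongrightarrow> (\<Sum>j\<in>UNIV. Q $ i $ j)"
      by (intro tendsto_sum tendsto_vec_nth assms(2))
    moreover have "(\<lambda>N. \<Sum>j\<in>UNIV. X N $ i $ j) \<longlonglongrightarrow> 1"
      by (rule Lim_transform_eventually[OF tendsto_const]) (use assms(1) in \<open>auto simp: stoch_def elim: eventually_mono\<close>)
    ultimately show ?thesis using LIMSEQ_unique by blast
  qed
  ultimately show ?thesis by (simp add: stoch_def)
qed

lemma cesaro_limit:
  assumes "memory_one p" "memory_one q" "0 \<le> a" "a \<le> 1" "0 \<le> b" "b \<le> 1"
  shows "\<exists>v. (\<forall>w. (\<lambda>N. cesaro_dist p a (mem1_pattern q b) N w) \<longlonglongrightarrow> v w) \<and>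
             (\<forall>w. 0 \<le> v w) \<and> (\<Sum>w\<in>UNIV. v w) = 1 \<and>
             (\<forall>w'. (\<Sum>w\<in>UNIV. v w * Mt p q $ w $ w') = v w')"
proof -
  note M = stoch_Mt[OF assms(1,2)]
  obtain Q where Q: "cmat (Mt p q) \<longlonglongrightarrow> Q" "Q ** Mt p q = Q"
    using cmat_converges[OF M] by blast
  have "\<forall>\<^sub>F N in sequentially. stoch (cmat (Mt p q) N)"
    using stoch_cmat[OF M] by (auto simp: eventually_sequentially intro!: exI[of _ 1])
  then have sQ: "stoch Q" using Q(1) by (rule stoch_limit)
  define u where "u = mu0 a b v* Q"
  have pu: "pdist u" unfolding u_def by (rule pdist_mult[OF pdist_mu0[OF assms(3-6)] sQ])
  have lim: "(\<lambda>N. cesaro_dist p a (mem1_pattern q b) N w) \<longlonglongrightarrow> u $ w" for w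
    unfolding cesaro_cmat u_def vector_matrix_mult_def
    by simp (intro tendsto_intros tendsto_vec_nth Q(1))
  have st: "(\<Sum>w\<in>UNIV. u $ w * Mt p q $ w $ w') = u $ w'" for w'
  proof -
    have "u v* Mt p q = u" unfolding u_def vector_matrix_mul_assoc Q(2) ..
    then show ?thesis by (simp add: vector_matrix_mult_def vec_eq_iff)
  qed
  show ?thesis
    by (rule exI[of _ "\<lambda>w. u $ w"]) (use lim pu st in \<open>auto simp: pdist_def\<close>)
qed



lemma swap_swap[simp]: "swap_outcome (swap_outcome w) = w"
  by (cases w) auto

lemma xcoop_swap[simp]: "xcoop (swap_outcome w) = ycoop w" and ycoop_swap[simp]: "ycoop (swap_outcome w) = xcoop w"
  by (cases w; simp)+

lemma hist_prob_swap:
  "hist_prob p a (mem1_pattern q b) h = hist_prob q b (mem1_pattern p a) (map swap_outcome h)"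
proof (induction h)
  case Nil
  then show ?case by simp
next
  case (Cons w h)
  have 1: "mem1_coop p a h = mem1_pattern p a (map swap_outcome h)"
    by (cases h) (simp_all add: mem1_coop_def mem1_pattern_def)
  have 2: "mem1_pattern q b h = mem1_coop q b (map swap_outcome h)"
    by (cases h) (simp_all add: mem1_coop_def mem1_pattern_def)
  show ?case using Cons by (simp add: 1 2 mult_ac)
qed

lemma swap_comp[simp]: "swap_outcome \<circ> swap_outcome = id"
  by (rule ext) simp

lemma map_swap_swap[simp]: "map swap_outcome (map swap_outcome h) = h"
  by simp

lemma round_dist_swap:
  "round_dist p a (mem1_pattern q b) n w = round_dist q b (mem1_pattern p a) n (swap_outcome w)"
  unfolding round_dist_def
proof (rule sum.reindex_bij_witness[where i="map swap_outcome" and j="map swap_outcome"])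
  fix h :: "outcome list"
  show "hist_prob q b (mem1_pattern p a) (swap_outcome w # map swap_outcome h) =
        hist_prob p a (mem1_pattern q b) (w # h)"
    using hist_prob_swap[of p a q b "w # h"] by simp
qed auto

lemma cesaro_swap:
  "cesaro_dist p a (mem1_pattern q b) N w = cesaro_dist q b (mem1_pattern p a) N (swap_outcome w)"
  unfolding cesaro_dist_def by (simp add: round_dist_swap[of p a q b])

lemma sX_expand: "sX T R P S v = v CC * R + v CD * S + v DC * T + v DD * P"
  by (simp add: sX_def sum_outcome)

lemma sY_expand: "sY T R P S v = v CC * R + v CD * T + v DC * S + v DD * P"
  by (simp add: sY_def sum_outcome)

lemma game_value:
  assumes "\<And>w. (\<lambda>N. cesaro_dist (p i) (x0 i) (mem1_pattern (p j) (x0 j)) N w) \<longlonglongrightarrow> v w"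
  shows "game_matrix T R P S p x0 i j = sX T R P S v"
  unfolding game_matrix_def sX_def
  by (rule limI) (intro tendsto_intros assms)

lemma mem1_pattern_sp:
  assumes "memory_one q" "0 \<le> b" "b \<le> 1"
  shows "strategy_pattern (mem1_pattern q b)"
  using assms by (auto simp: strategy_pattern_def mem1_pattern_def memory_one_def split: list.split)

lemma game_diag:
  assumes "agreeable p"
  shows "round_dist p 1 (mem1_pattern p 1) n w = (if w = CC then 1 else 0)"
proof (induction n arbitrary: w)
  case 0
  then show ?case by (cases w) (simp_all add: round_dist_0 mem1_pattern_def prob_play_def)
next
  case (Suc n)
  then show ?case using assms
    by (cases w) (simp_all add: round_dist_Suc sum_outcome Mt_def prob_play_def agreeable_def)
qed

theorem ESS_part:
  fixes T R P S :: real
    and p :: "'i::finite \<Rightarrow> outcome \<Rightarrow> real"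
    and x0 :: "'i \<Rightarrow> real"
    and istar :: 'i
  assumes PD: "PD_payoffs T R P S"
    and m1: "\<And>i. memory_one (p i)"
    and x0b: "\<And>i. 0 \<le> x0 i \<and> x0 i \<le> 1"
    and gd: "good T R P S (p istar)"
    and x1: "x0 istar = 1"
    and na: "\<And>j. j \<noteq> istar \<Longrightarrow> \<not> agreeable (p j)"
  shows "ESS (game_matrix T R P S p x0) istar"
proof -
  have ag: "agreeable (p istar)" using gd by (simp add: good_def)
  have "(\<lambda>N. cesaro_dist (p istar) (x0 istar) (mem1_pattern (p istar) (x0 istar)) N w)
          \<longlonglongrightarrow> (if w = CC then 1 else 0)" for w
  proof (rule Lim_transform_eventually[OF tendsto_const])
    show "\<forall>\<^sub>F N in sequentially. (if w = CC then 1 else 0) =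
       cesaro_dist (p istar) (x0 istar) (mem1_pattern (p istar) (x0 istar)) N w"
      unfolding eventually_sequentially
      by (rule exI[of _ 1]) (simp add: cesaro_dist_def x1 game_diag[OF ag])
  qed
  then have "game_matrix T R P S p x0 istar istar = sX T R P S (\<lambda>w. if w = CC then 1 else 0)"
    by (rule game_value)
  then have Aii: "game_matrix T R P S p x0 istar istar = R"
    by (simp add: sX_expand)
  show ?thesis unfolding ESS_def
  proof (intro allI impI)
    fix j assume j: "j \<noteq> istar"
    obtain v where v: "\<And>w. (\<lambda>N. cesaro_dist (p j) (x0 j) (mem1_pattern (p istar) (x0 istar)) N w) \<longlonglongrightarrow> v w"
      "\<And>w. 0 \<le> v w" "(\<Sum>w\<in>UNIV. v w) = 1"
      "\<And>w'. (\<Sum>w\<in>UNIV. v w * Mt (p j) (p istar) $ w $ w') = v w'"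
      using cesaro_limit[OF m1 m1, of "x0 j" "x0 istar" j istar] x0b by blast
    have Aji: "game_matrix T R P S p x0 j istar = sX T R P S v" by (rule game_value) (rule v(1))
    show "game_matrix T R P S p x0 j istar < game_matrix T R P S p x0 istar istar"
    proof (rule ccontr)
      assume "\<not> ?thesis"
      then have ge: "sX T R P S v \<ge> R" using Aji Aii by simp
      define v' where "v' = (\<lambda>w. v (swap_outcome w))"
      have ld: "limit_dist (p istar) 1 (mem1_pattern (p j) (x0 j)) v'"
        unfolding limit_dist_def
      proof (intro exI[of _ id] conjI allI)
        fix w
        show "(\<lambda>k. cesaro_dist (p istar) 1 (mem1_pattern (p j) (x0 j)) (id k) w) \<longlonglongrightarrow> v' w"
          using v(1)[of "swap_outcome w"] x1 by (simp add: cesaro_swap[of "p j" "x0 j" "p istar" 1] v'_def)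
      qed (simp add: strict_mono_def)
      have sY': "sY T R P S v' = sX T R P S v" "sX T R P S v' = sY T R P S v"
        by (simp_all add: sX_expand sY_expand v'_def)
      have sp: "strategy_pattern (mem1_pattern (p j) (x0 j))"
        using mem1_pattern_sp[OF m1[of j]] x0b[of j] by simp
      have "\<forall>x0\<in>{0..1}. \<forall>\<sigma>. strategy_pattern \<sigma> \<longrightarrow>
        (\<forall>v. limit_dist (p istar) x0 \<sigma> v \<longrightarrow> sY T R P S v \<ge> R \<longrightarrow>
               sY T R P S v = R \<and> sX T R P S v = R)" using gd by (simp add: good_def)
      then have "\<forall>\<sigma>. strategy_pattern \<sigma> \<longrightarrow>
        (\<forall>v. limit_dist (p istar) 1 \<sigma> v \<longrightarrow> sY T R P S v \<ge> R \<longrightarrow>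
               sY T R P S v = R \<and> sX T R P S v = R)" by (rule bspec) simp
      then have "\<forall>v. limit_dist (p istar) 1 (mem1_pattern (p j) (x0 j)) v \<longrightarrow> sY T R P S v \<ge> R \<longrightarrow>
               sY T R P S v = R \<and> sX T R P S v = R"
        using sp by blast
      then have "limit_dist (p istar) 1 (mem1_pattern (p j) (x0 j)) v' \<longrightarrow> sY T R P S v' \<ge> R \<longrightarrow>
               sY T R P S v' = R \<and> sX T R P S v' = R"
        by (rule spec)
      then have "sY T R P S v' = R \<and> sX T R P S v' = R"
        using ld ge sY' by simp
      then have sXY: "sX T R P S v = R" "sY T R P S v = R" using sY' by auto
      have s1: "v CC + v CD + v DC + v DD = 1" using v(3) by (simp add: sum_outcome)
      have pd: "T > R" "R > P" "P > S" "2 * R > T + S" using PD by (auto simp: PD_payoffs_def)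
      have s1': "v CC = 1 - v CD - v DC - v DD" using s1 by linarith
      have "(2*R - T - S) * (v CD + v DC) + (2*R - 2*P) * v DD = 2*R - (sX T R P S v + sY T R P S v)"
        unfolding sX_expand sY_expand s1' by (simp add: algebra_simps)
      then have e0: "(2*R - T - S) * (v CD + v DC) + (2*R - 2*P) * v DD = 0"
        using sXY by simp
      have n1: "(2*R - T - S) * (v CD + v DC) \<ge> 0" "(2*R - 2*P) * v DD \<ge> 0"
        using pd v(2) by auto
      have "(2*R - T - S) * (v CD + v DC) = 0" "(2*R - 2*P) * v DD = 0" using e0 n1 by linarith+
      then have "v CD + v DC = 0" "v DD = 0" using pd by auto
      then have vv: "v CD = 0" "v DC = 0" "v DD = 0" "v CC = 1" using v(2)[of CD] v(2)[of DC] s1 by linarith+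
      have "v CC = (\<Sum>w\<in>UNIV. v w * Mt (p j) (p istar) $ w $ CC)" using v(4)[of CC] by simp
      also have "\<dots> = p j CC * p istar CC" using vv by (simp add: sum_outcome Mt_def prob_play_def)
      finally have "p j CC = 1" using vv ag by (simp add: agreeable_def)
      with na[OF j] show False by (simp add: agreeable_def)
    qed
  qed
qed



lemma ode_exp:
  fixes f h :: "real \<Rightarrow> real"
  assumes hc: "continuous_on {0..} h"
    and fd: "\<And>t. t \<ge> 0 \<Longrightarrow> (f has_real_derivative (h t * f t)) (at t within {0..})"
    and t: "t \<ge> 0"
  shows "f t = f 0 * exp (integral {0..t} h)"
proof -
  define H where "H s = integral {0..s} h" for s
  have hc': "continuous_on {0..t} h" using hc by (rule continuous_on_subset) auto
  have Hd: "(H has_real_derivative h s) (at s within {0..t})" if "s \<in> {0..t}" for s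
    unfolding H_def has_real_derivative_iff_has_vector_derivative
    by (rule integral_has_vector_derivative[OF hc' that])
  have fd': "(f has_real_derivative (h s * f s)) (at s within {0..t})" if "s \<in> {0..t}" for s
    using fd[of s] that by (auto intro: has_field_derivative_subset)
  define g where "g s = f s * exp (- H s)" for s
  have "(g has_real_derivative 0) (at s within {0..t})" if s: "s \<in> {0..t}" for s
  proof -
    have e: "((\<lambda>s. exp (- H s)) has_real_derivative (exp (- H s) * (- h s))) (at s within {0..t})"
      by (rule DERIV_chain2[OF DERIV_exp DERIV_minus[OF Hd[OF s]]])
    show ?thesis
      unfolding g_def by (rule DERIV_cong[OF DERIV_mult[OF fd'[OF s] e]]) (simp add: algebra_simps)
  qed
  then obtain c where "\<forall>s\<in>{0..t}. g s = c"
    using has_field_derivative_zero_constant[of "{0..t}" g] by auto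
  then have "g t = g 0" using t by auto
  then have "f t * exp (- H t) = f 0" by (simp add: g_def H_def)
  then have "f t * exp (- H t) * exp (H t) = f 0 * exp (H t)" by simp
  then show ?thesis by (simp add: H_def mult.assoc flip: exp_add)
qed

lemma sol_comp_deriv:
  assumes "replicator_solution A x" "t \<ge> 0"
  shows "((\<lambda>t. x t $ i) has_real_derivative (replicator A (x t) $ i)) (at t within {0..})"
  unfolding has_real_derivative_iff_has_vector_derivative
  using bounded_linear.has_vector_derivative[OF bounded_linear_vec_nth, of x "replicator A (x t)" "at t within {0..}" i]
    assms by (simp add: replicator_solution_def)

lemma sol_cont:
  assumes "replicator_solution A x"
  shows "continuous_on {0..} x"
  unfolding continuous_on_eq_continuous_within
proof
  fix t :: real assume "t \<in> {0..}"
  then have "(x has_vector_derivative replicator A (x t)) (at t within {0..})"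
    using assms by (simp add: replicator_solution_def)
  then show "continuous (at t within {0..}) x" by (rule has_vector_derivative_continuous)
qed

lemma cont_Avec: "continuous_on S x \<Longrightarrow> continuous_on S (\<lambda>t. A_vec A i (x t))"
  unfolding A_vec_def by (intro continuous_intros continuous_on_component)

lemma cont_Aavg: "continuous_on S x \<Longrightarrow> continuous_on S (\<lambda>t. A_avg A (x t))"
  unfolding A_avg_def by (intro continuous_intros continuous_on_component cont_Avec)

lemma sum_repl: "(\<Sum>i\<in>UNIV. replicator A \<pi> $ i) = - A_avg A \<pi> * ((\<Sum>i\<in>UNIV. \<pi> $ i) - 1)"
proof -
  have "(\<Sum>i\<in>UNIV. replicator A \<pi> $ i) = (\<Sum>i\<in>UNIV. \<pi> $ i * A_vec A i \<pi>) - (\<Sum>i\<in>UNIV. \<pi> $ i) * A_avg A \<pi>"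
    by (simp add: replicator_def right_diff_distrib sum_subtractf sum_distrib_right)
  moreover have "(\<Sum>i\<in>UNIV. \<pi> $ i * A_vec A i \<pi>) = A_avg A \<pi>" by (simp add: A_avg_def)
  ultimately show ?thesis by (simp add: algebra_simps)
qed

lemma sol_simplex:
  assumes sol: "replicator_solution A x" and x0: "x 0 \<in> rep_simplex" and t: "t \<ge> 0"
  shows "x t \<in> rep_simplex"
proof -
  have xc: "continuous_on {0..} x" by (rule sol_cont[OF sol])
  have "0 \<le> x t $ i" for i
  proof -
    have "x t $ i = x 0 $ i * exp (integral {0..t} (\<lambda>t. A_vec A i (x t) - A_avg A (x t)))"
    proof (rule ode_exp[where f="\<lambda>t. x t $ i"])
      show "continuous_on {0..} (\<lambda>t. A_vec A i (x t) - A_avg A (x t))"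
        by (intro continuous_intros cont_Avec cont_Aavg xc)
      fix s :: real assume "s \<ge> 0"
      then show "((\<lambda>t. x t $ i) has_real_derivative (A_vec A i (x s) - A_avg A (x s)) * x s $ i) (at s within {0..})"
        using sol_comp_deriv[OF sol, of s i] by (simp add: replicator_def mult.commute)
    qed (rule t)
    then show ?thesis using x0 by (simp add: rep_simplex_def)
  qed
  moreover have "(\<Sum>i\<in>UNIV. x t $ i) = 1"
  proof -
    have "(\<Sum>i\<in>UNIV. x t $ i) - 1 = ((\<Sum>i\<in>UNIV. x 0 $ i) - 1) * exp (integral {0..t} (\<lambda>t. - A_avg A (x t)))"
    proof (rule ode_exp[where f="\<lambda>t. (\<Sum>i\<in>UNIV. x t $ i) - 1"])
      show "continuous_on {0..} (\<lambda>t. - A_avg A (x t))"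
        by (intro continuous_intros cont_Aavg xc)
      fix s :: real assume s: "s \<ge> 0"
      have "((\<lambda>t. (\<Sum>i\<in>UNIV. x t $ i) - 1) has_real_derivative (\<Sum>i\<in>UNIV. replicator A (x s) $ i)) (at s within {0..})"
      proof -
        have D: "\<And>i. ((\<lambda>t. x t $ i) has_real_derivative (replicator A (x s) $ i)) (at s within {0..})"
          by (rule sol_comp_deriv[OF sol s])
        show ?thesis by (intro derivative_eq_intros) (auto intro: D)
      qed
      then show "((\<lambda>t. (\<Sum>i\<in>UNIV. x t $ i) - 1) has_real_derivative - A_avg A (x s) * ((\<Sum>i\<in>UNIV. x s $ i) - 1)) (at s within {0..})"
        by (simp add: sum_repl)
    qed (rule t)
    then show ?thesis using x0 by (simp add: rep_simplex_def)
  qed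
  ultimately show ?thesis by (simp add: rep_simplex_def)
qed

definition gapc :: "('i::finite \<Rightarrow> 'i \<Rightarrow> real) \<Rightarrow> 'i \<Rightarrow> real" where
  "gapc A i0 = Min (insert 1 ((\<lambda>j. A i0 i0 - A j i0) ` (UNIV - {i0})))"

definition Kb :: "('i::finite \<Rightarrow> 'i \<Rightarrow> real) \<Rightarrow> real" where
  "Kb A = (\<Sum>k\<in>UNIV. \<Sum>l\<in>UNIV. \<bar>A k l\<bar>)"

lemma Kb_ge: "\<bar>A k l\<bar> \<le> Kb A"
proof -
  have "\<bar>A k l\<bar> \<le> (\<Sum>l\<in>UNIV. \<bar>A k l\<bar>)" by (rule member_le_sum) auto
  also have "\<dots> \<le> Kb A" unfolding Kb_def by (rule member_le_sum) (auto intro: sum_nonneg)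
  finally show ?thesis .
qed

lemma Kb_nonneg: "0 \<le> Kb A"
  using Kb_ge[of A] abs_ge_zero order_trans by blast

lemma gapc_pos: assumes "\<forall>j. j \<noteq> i0 \<longrightarrow> A j i0 < A i0 i0" shows "0 < gapc A i0"
  unfolding gapc_def using assms by (subst Min_gr_iff) auto

lemma gapc_le: assumes "j \<noteq> i0" shows "gapc A i0 \<le> A i0 i0 - A j i0"
  unfolding gapc_def using assms by (intro Min_le) auto

lemma simplex_sum_if:
  assumes "\<pi> \<in> rep_simplex"
  shows "(\<Sum>l\<in>UNIV. \<pi> $ l * (if l = i0 then 0 else a)) = a * (1 - \<pi> $ i0)"
proof -
  have "(\<Sum>l\<in>UNIV. \<pi> $ l * (if l = i0 then 0 else a)) = (\<Sum>l\<in>UNIV. a * \<pi> $ l - (if l = i0 then a * \<pi> $ l else 0))"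
    by (rule sum.cong) auto
  also have "\<dots> = a * (\<Sum>l\<in>UNIV. \<pi> $ l) - a * \<pi> $ i0"
    by (simp add: sum_subtractf sum_distrib_left)
  finally show ?thesis using assms by (simp add: rep_simplex_def algebra_simps)
qed

lemma Avec_dev:
  assumes "\<pi> \<in> rep_simplex"
  shows "\<bar>A_vec A k \<pi> - A k i0\<bar> \<le> 2 * Kb A * (1 - \<pi> $ i0)"
proof -
  have s1: "(\<Sum>l\<in>UNIV. \<pi> $ l) = 1" and nn: "\<And>l. 0 \<le> \<pi> $ l" using assms by (auto simp: rep_simplex_def)
  have "A_vec A k \<pi> - A k i0 = (\<Sum>l\<in>UNIV. \<pi> $ l * (A k l - A k i0))"
  proof -
    have "(\<Sum>l\<in>UNIV. \<pi> $ l * (A k l - A k i0)) = A_vec A k \<pi> - (\<Sum>l\<in>UNIV. \<pi> $ l) * A k i0"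
      by (simp add: A_vec_def right_diff_distrib sum_subtractf sum_distrib_right)
    then show ?thesis using s1 by simp
  qed
  also have "\<bar>\<dots>\<bar> \<le> (\<Sum>l\<in>UNIV. \<bar>\<pi> $ l * (A k l - A k i0)\<bar>)" by (rule sum_abs)
  also have "\<dots> \<le> (\<Sum>l\<in>UNIV. \<pi> $ l * (if l = i0 then 0 else 2 * Kb A))"
  proof (rule sum_mono)
    fix l
    have "\<bar>A k l - A k i0\<bar> \<le> 2 * Kb A" using Kb_ge[of A k l] Kb_ge[of A k i0] by linarith
    then show "\<bar>\<pi> $ l * (A k l - A k i0)\<bar> \<le> \<pi> $ l * (if l = i0 then 0 else 2 * Kb A)"
      using nn[of l] by (auto simp: abs_mult intro: mult_left_mono)
  qed
  also have "\<dots> = 2 * Kb A * (1 - \<pi> $ i0)" by (rule simplex_sum_if[OF assms])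
  finally show ?thesis .
qed

lemma kal:
  assumes ess: "\<forall>j. j \<noteq> i0 \<longrightarrow> A j i0 < A i0 i0" and pi: "\<pi> \<in> rep_simplex"
    and small: "(1 - \<pi> $ i0) * (8 * Kb A + 8) \<le> gapc A i0"
  shows "A_vec A i0 \<pi> - A_avg A \<pi> \<ge> gapc A i0 / 2 * (1 - \<pi> $ i0)"
proof -
  define u where "u = 1 - \<pi> $ i0"
  define K where "K = Kb A"
  define c where "c = gapc A i0"
  have s1: "(\<Sum>l\<in>UNIV. \<pi> $ l) = 1" and nn: "\<And>l. 0 \<le> \<pi> $ l" using pi by (auto simp: rep_simplex_def)
  have u0: "0 \<le> u"
  proof -
    have "\<pi> $ i0 \<le> (\<Sum>l\<in>UNIV. \<pi> $ l)" by (rule member_le_sum) (auto simp: nn)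
    then show ?thesis using s1 by (simp add: u_def)
  qed
  have K0: "0 \<le> K" by (simp add: K_def Kb_nonneg)
  have "8 * (K * u) + 8 * u \<le> c" using small by (simp add: u_def K_def c_def algebra_simps)
  then have Ku: "4 * (K * u) \<le> c / 2" using u0 by linarith
  have "A_vec A i0 \<pi> - A_avg A \<pi> = (\<Sum>k\<in>UNIV. \<pi> $ k * (A_vec A i0 \<pi> - A_vec A k \<pi>))"
  proof -
    have "(\<Sum>k\<in>UNIV. \<pi> $ k * (A_vec A i0 \<pi> - A_vec A k \<pi>)) = (\<Sum>k\<in>UNIV. \<pi> $ k) * A_vec A i0 \<pi> - A_avg A \<pi>"
      by (simp add: A_avg_def right_diff_distrib sum_subtractf sum_distrib_right)
    then show ?thesis using s1 by simp
  qed
  also have "\<dots> \<ge> (\<Sum>k\<in>UNIV. \<pi> $ k * (if k = i0 then 0 else c / 2))"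
  proof (rule sum_mono)
    fix k
    show "\<pi> $ k * (if k = i0 then 0 else c / 2) \<le> \<pi> $ k * (A_vec A i0 \<pi> - A_vec A k \<pi>)"
    proof (cases "k = i0")
      case False
      have "c \<le> A i0 i0 - A k i0" using gapc_le[OF False] by (simp add: c_def)
      moreover have "\<bar>A_vec A i0 \<pi> - A i0 i0\<bar> \<le> 2 * K * u" "\<bar>A_vec A k \<pi> - A k i0\<bar> \<le> 2 * K * u"
        using Avec_dev[OF pi] by (simp_all add: K_def u_def)
      ultimately have "c / 2 \<le> A_vec A i0 \<pi> - A_vec A k \<pi>" using Ku by (simp add: abs_le_iff)
      then show ?thesis using False nn[of k] mult_left_mono[of "c / 2" "A_vec A i0 \<pi> - A_vec A k \<pi>" "\<pi> $ k"] by simp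
    qed simp
  qed
  also have "(\<Sum>k\<in>UNIV. \<pi> $ k * (if k = i0 then 0 else c / 2)) = c / 2 * u"
    unfolding u_def by (rule simplex_sum_if[OF pi])
  finally show ?thesis by (simp add: c_def u_def)
qed

lemma vertex_simplex: "vertex i0 \<in> rep_simplex"
  by (simp add: vertex_def rep_simplex_def)

lemma dist_vertex:
  assumes pi: "\<pi> \<in> rep_simplex"
  shows "dist \<pi> (vertex i0) \<le> 2 * (1 - \<pi> $ i0)" "1 - \<pi> $ i0 \<le> dist \<pi> (vertex i0)"
proof -
  have s1: "(\<Sum>l\<in>UNIV. \<pi> $ l) = 1" and nn: "\<And>l. 0 \<le> \<pi> $ l" using pi by (auto simp: rep_simplex_def)
  have le1: "\<pi> $ i0 \<le> 1"
  proof -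
    have "\<pi> $ i0 \<le> (\<Sum>l\<in>UNIV. \<pi> $ l)" by (rule member_le_sum) (auto simp: nn)
    then show ?thesis using s1 by simp
  qed
  have "dist \<pi> (vertex i0) \<le> (\<Sum>i\<in>UNIV. \<bar>(\<pi> - vertex i0) $ i\<bar>)"
    unfolding dist_norm by (rule norm_le_l1_cart)
  also have "\<dots> = (\<Sum>i\<in>UNIV. \<pi> $ i + (if i = i0 then 1 - 2 * \<pi> $ i else 0))"
    by (rule sum.cong) (auto simp: vertex_def nn le1)
  also have "\<dots> = 2 * (1 - \<pi> $ i0)" by (simp add: sum.distrib s1)
  finally show "dist \<pi> (vertex i0) \<le> 2 * (1 - \<pi> $ i0)" .
  have "1 - \<pi> $ i0 = \<bar>(\<pi> - vertex i0) $ i0\<bar>" using le1 by (simp add: vertex_def)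
  also have "\<dots> \<le> dist \<pi> (vertex i0)" unfolding dist_norm by (rule component_le_norm_cart)
  finally show "1 - \<pi> $ i0 \<le> dist \<pi> (vertex i0)" .
qed

lemma simplex_le1: assumes "\<pi> \<in> rep_simplex" shows "\<pi> $ i \<le> 1" "0 \<le> \<pi> $ i"
proof -
  have s1: "(\<Sum>l\<in>UNIV. \<pi> $ l) = 1" and nn: "\<And>l. 0 \<le> \<pi> $ l" using assms by (auto simp: rep_simplex_def)
  have "\<pi> $ i \<le> (\<Sum>l\<in>UNIV. \<pi> $ l)" by (rule member_le_sum) (auto simp: nn)
  then show "\<pi> $ i \<le> 1" using s1 by simp
  show "0 \<le> \<pi> $ i" by (rule nn)
qed

lemma u_deriv:
  assumes sol: "replicator_solution A x" and t: "t > 0"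
  shows "((\<lambda>t. 1 - x t $ i0) has_real_derivative - (x t $ i0 * (A_vec A i0 (x t) - A_avg A (x t)))) (at t)"
proof -
  have "((\<lambda>t. x t $ i0) has_real_derivative (replicator A (x t) $ i0)) (at t within {0..})"
    using sol_comp_deriv[OF sol] t by simp
  moreover have "at t within {0..} = at t" using t by (intro at_within_interior) (simp add: interior_real_atLeast)
  ultimately have "((\<lambda>t. x t $ i0) has_real_derivative (replicator A (x t) $ i0)) (at t)" by simp
  then show ?thesis
    by (auto intro!: derivative_eq_intros simp: replicator_def)
qed

lemma g_mono:
  fixes A :: "'i::finite \<Rightarrow> 'i \<Rightarrow> real" and i0 :: 'i
  assumes ess: "\<forall>j. j \<noteq> i0 \<longrightarrow> A j i0 < A i0 i0"
    and sol: "replicator_solution A x" and x0: "x 0 \<in> rep_simplex"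
    and T: "T \<ge> 0"
    and below: "\<And>s. 0 < s \<Longrightarrow> s < T \<Longrightarrow> 1 - x s $ i0 \<le> min (1/2) (gapc A i0 / (8 * Kb A + 8))"
  shows "(1 - x T $ i0) * exp (gapc A i0 / 4 * T) \<le> (1 - x 0 $ i0) * exp (gapc A i0 / 4 * 0)"
proof (rule DERIV_nonpos_imp_decreasing_open[OF T])
  define c where "c = gapc A i0"
  define K where "K = Kb A"
  have c0: "c > 0" using gapc_pos[of i0 A, OF ess] by (simp add: c_def)
  have K0: "8 * K + 8 > 0" using Kb_nonneg[of A] by (simp add: K_def)
  fix s :: real assume s: "0 < s" "s < T"
  have xs: "x s \<in> rep_simplex" using sol_simplex[OF sol x0] s by simp
  define u where "u = 1 - x s $ i0"
  define D where "D = A_vec A i0 (x s) - A_avg A (x s)"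
  have ub: "u \<le> 1/2" "u \<le> c / (8 * K + 8)" using below[OF s] by (simp_all add: u_def c_def K_def)
  have u0: "0 \<le> u" using simplex_le1[OF xs, of i0] by (simp add: u_def)
  have "u * (8 * K + 8) \<le> c" using ub(2) K0 by (simp add: pos_le_divide_eq)
  then have "D \<ge> c / 2 * u" using kal[of i0 A, OF ess xs] by (simp add: D_def u_def c_def K_def)
  moreover have "c / 2 * u \<ge> 0" using c0 u0 by simp
  ultimately have D0: "D \<ge> 0" by linarith
  have xi: "x s $ i0 \<ge> 1/2" using ub(1) by (simp add: u_def)
  have "x s $ i0 * D \<ge> 1/2 * D" using mult_right_mono[OF xi D0] by simp
  then have key: "x s $ i0 * D \<ge> c / 4 * u" using \<open>D \<ge> c / 2 * u\<close> by linarith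
  have "((\<lambda>t. (1 - x t $ i0) * exp (c / 4 * t)) has_real_derivative
        (- (x s $ i0 * D)) * exp (c / 4 * s) + (exp (c / 4 * s) * (c / 4)) * u) (at s)"
    unfolding D_def u_def
    by (rule DERIV_mult[OF u_deriv[OF sol s(1)]] DERIV_cong[OF DERIV_chain2[OF DERIV_exp DERIV_cmult[OF DERIV_ident]]])+ simp
  moreover have "(- (x s $ i0 * D)) * exp (c / 4 * s) + (exp (c / 4 * s) * (c / 4)) * u \<le> 0"
  proof -
    have "(- (x s $ i0 * D)) * exp (c / 4 * s) + (exp (c / 4 * s) * (c / 4)) * u = exp (c / 4 * s) * (c / 4 * u - x s $ i0 * D)"
      by (simp add: algebra_simps)
    also have "\<dots> \<le> 0" using key by (intro mult_nonneg_nonpos) auto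
    finally show ?thesis .
  qed
  ultimately show "\<exists>y. ((\<lambda>t. (1 - x t $ i0) * exp (gapc A i0 / 4 * t)) has_real_derivative y) (at s) \<and> y \<le> 0"
    by (auto simp: c_def)
next
  have "continuous_on {0..T} x" using sol_cont[OF sol] by (rule continuous_on_subset) auto
  then show "continuous_on {0..T} (\<lambda>t. (1 - x t $ i0) * exp (gapc A i0 / 4 * t))"
    by (intro continuous_intros continuous_on_component)
qed

lemma u_decay:
  fixes A :: "'i::finite \<Rightarrow> 'i \<Rightarrow> real" and i0 :: 'i
  assumes ess: "\<forall>j. j \<noteq> i0 \<longrightarrow> A j i0 < A i0 i0"
    and sol: "replicator_solution A x" and x0: "x 0 \<in> rep_simplex"
    and init: "1 - x 0 $ i0 < min (1/2) (gapc A i0 / (8 * Kb A + 8))"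
    and t: "t \<ge> 0"
  shows "1 - x t $ i0 \<le> (1 - x 0 $ i0) * exp (- (gapc A i0 / 4) * t)"
proof -
  define u0 where "u0 = min (1/2) (gapc A i0 / (8 * Kb A + 8))"
  define u where "u s = 1 - x s $ i0" for s
  define k where "k = gapc A i0 / 4"
  have k0: "k > 0" using gapc_pos[of i0 A, OF ess] by (simp add: k_def)
  have uc: "continuous_on {0..} u"
    unfolding u_def by (intro continuous_intros continuous_on_component sol_cont[OF sol])
  have gm: "u T * exp (k * T) \<le> u 0" if "T \<ge> 0" "\<And>s. 0 < s \<Longrightarrow> s < T \<Longrightarrow> u s \<le> u0" for T
    using g_mono[of i0 A, OF ess sol x0 that(1)] that(2) by (simp add: u_def u0_def k_def)
  have below: "u s < u0" if s: "s \<ge> 0" for s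
  proof (rule ccontr)
    assume "\<not> u s < u0"
    define Z where "Z = {0..s} \<inter> u -` {u0..}"
    have Zne: "Z \<noteq> {}" using s \<open>\<not> u s < u0\<close> by (auto simp: Z_def)
    have Zbd: "bdd_below Z" by (auto simp: Z_def bdd_below_def)
    have Zcl: "closed Z" unfolding Z_def
      by (rule continuous_closed_preimage) (auto intro: continuous_on_subset[OF uc])
    define t1 where "t1 = Inf Z"
    have t1Z: "t1 \<in> Z" unfolding t1_def by (rule closed_contains_Inf[OF Zne Zbd Zcl])
    then have t1: "0 \<le> t1" "t1 \<le> s" "u t1 \<ge> u0" by (auto simp: Z_def)
    have "u r \<le> u0" if r: "0 < r" "r < t1" for r
    proof -
      have "r \<notin> Z"
      proof
        assume "r \<in> Z"
        then have "t1 \<le> r" unfolding t1_def by (rule cInf_lower[OF _ Zbd])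
        with r show False by simp
      qed
      then show ?thesis using r t1 by (auto simp: Z_def)
    qed
    then have "u t1 * exp (k * t1) \<le> u 0" by (rule gm[OF t1(1)])
    moreover have "u t1 \<le> u t1 * exp (k * t1)"
    proof -
      have "1 \<le> exp (k * t1)" using k0 t1(1) by simp
      moreover have "0 \<le> u t1" using simplex_le1[OF sol_simplex[OF sol x0 t1(1)], of i0] by (simp add: u_def)
      ultimately show ?thesis using mult_left_mono[of 1 "exp (k * t1)" "u t1"] by simp
    qed
    moreover have "u 0 < u0" using init by (simp add: u_def u0_def)
    ultimately show False using t1(3) by linarith
  qed
  have "u t * exp (k * t) \<le> u 0" using below by (intro gm[OF t]) (simp add: less_imp_le)
  then have "u t * exp (k * t) * exp (- k * t) \<le> u 0 * exp (- k * t)"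
    by (rule mult_right_mono) simp
  then show ?thesis by (simp add: u_def k_def mult.assoc flip: exp_add)
qed

theorem attractor_part:
  fixes A :: "'i::finite \<Rightarrow> 'i \<Rightarrow> real" and i0 :: 'i
  assumes ess: "ESS A i0"
  shows "replicator_attractor A (vertex i0)"
proof -
  have ess': "\<forall>j. j \<noteq> i0 \<longrightarrow> A j i0 < A i0 i0" using ess by (simp add: ESS_def)
  define u0 where "u0 = min (1/2) (gapc A i0 / (8 * Kb A + 8))"
  define k where "k = gapc A i0 / 4"
  have c0: "gapc A i0 > 0" using gapc_pos[of i0 A, OF ess'] .
  have u00: "u0 > 0" using c0 Kb_nonneg[of A] by (simp add: u0_def)
  have main: "dist (x t) (vertex i0) \<le> 2 * dist (x 0) (vertex i0) * exp (- k * t)"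
    if sol: "replicator_solution A x" and x0: "x 0 \<in> rep_simplex" and d: "dist (x 0) (vertex i0) < u0"
      and t: "t \<ge> 0" for x t
  proof -
    have "1 - x 0 $ i0 < u0" using dist_vertex(2)[OF x0, of i0] d by linarith
    then have "1 - x t $ i0 \<le> (1 - x 0 $ i0) * exp (- k * t)"
      using u_decay[of i0 A, OF ess' sol x0 _ t] by (simp add: u0_def k_def)
    also have "\<dots> \<le> dist (x 0) (vertex i0) * exp (- k * t)"
      using dist_vertex(2)[OF x0, of i0] by (intro mult_right_mono) auto
    finally have "2 * (1 - x t $ i0) \<le> 2 * dist (x 0) (vertex i0) * exp (- k * t)" by simp
    moreover have "dist (x t) (vertex i0) \<le> 2 * (1 - x t $ i0)"
      by (rule dist_vertex(1)[OF sol_simplex[OF sol x0 t]])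
    ultimately show ?thesis by linarith
  qed
  have k0: "k > 0" using c0 by (simp add: k_def)
  have stab: "\<forall>\<epsilon>>0. \<exists>\<delta>>0. \<forall>x. replicator_solution A x \<and> x 0 \<in> rep_simplex \<and> dist (x 0) (vertex i0) < \<delta> \<longrightarrow>
        (\<forall>t\<ge>0. dist (x t) (vertex i0) < \<epsilon>)"
  proof (intro allI impI)
    fix \<epsilon> :: real assume e: "\<epsilon> > 0"
    show "\<exists>\<delta>>0. \<forall>x. replicator_solution A x \<and> x 0 \<in> rep_simplex \<and> dist (x 0) (vertex i0) < \<delta> \<longrightarrow>
        (\<forall>t\<ge>0. dist (x t) (vertex i0) < \<epsilon>)"
    proof (intro exI[of _ "min u0 (\<epsilon> / 2)"] conjI allI impI)
      show "0 < min u0 (\<epsilon> / 2)" using u00 e by simp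
      fix x and t :: real assume H: "replicator_solution A x \<and> x 0 \<in> rep_simplex \<and> dist (x 0) (vertex i0) < min u0 (\<epsilon> / 2)"
        and t: "0 \<le> t"
      have "dist (x t) (vertex i0) \<le> 2 * dist (x 0) (vertex i0) * exp (- k * t)"
        using H t by (intro main) auto
      also have "\<dots> \<le> 2 * dist (x 0) (vertex i0)"
      proof -
        have "exp (- k * t) \<le> 1" using k0 t by simp
        then show ?thesis using mult_left_mono[of "exp (- k * t)" 1 "2 * dist (x 0) (vertex i0)"] by simp
      qed
      also have "\<dots> < \<epsilon>" using H by simp
      finally show "dist (x t) (vertex i0) < \<epsilon>" .
    qed
  qed
  have attr: "\<exists>\<delta>>0. \<forall>x. replicator_solution A x \<and> x 0 \<in> rep_simplex \<and> dist (x 0) (vertex i0) < \<delta> \<longrightarrow>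
        (x \<longlongrightarrow> vertex i0) at_top"
  proof (intro exI[of _ u0] conjI allI impI)
    show "0 < u0" by (rule u00)
    fix x assume H: "replicator_solution A x \<and> x 0 \<in> rep_simplex \<and> dist (x 0) (vertex i0) < u0"
    have lim0: "((\<lambda>t. 2 * dist (x 0) (vertex i0) * exp (- k * t)) \<longlongrightarrow> 0) at_top"
    proof -
      have "LIM t at_top. (- k) * t :> at_bot"
        by (rule filterlim_tendsto_neg_mult_at_bot[OF tendsto_const]) (use k0 in \<open>auto intro: filterlim_ident\<close>)
      then have "((\<lambda>t. exp (- k * t)) \<longlongrightarrow> 0) at_top"
        by (rule filterlim_compose[OF exp_at_bot])
      then show ?thesis by (rule tendsto_mult_right_zero)
    qed
    show "(x \<longlongrightarrow> vertex i0) at_top"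
    proof (rule tendsto_dist_iff[THEN iffD2], rule Lim_null_comparison[OF _ lim0])
      show "\<forall>\<^sub>F t in (at_top :: real filter). norm (dist (x t) (vertex i0)) \<le> 2 * dist (x 0) (vertex i0) * exp (- k * t)"
        using eventually_ge_at_top[of "0::real"]
      proof eventually_elim
        case (elim t)
        then show ?case using H main[of x t] by simp
      qed
    qed
  qed
  have dl: "(\<Sum>j\<in>UNIV. (if j = i0 then 1 else 0) * f j) = (f i0 :: real)" for f :: "'i \<Rightarrow> real"
  proof -
    have "(\<Sum>j\<in>UNIV. (if j = i0 then 1 else 0) * f j) = (\<Sum>j\<in>UNIV. if j = i0 then f j else 0)"
      by (rule sum.cong) auto
    then show ?thesis by simp
  qed
  have eq: "replicator A (vertex i0) = 0"
  proof -
    have "A_vec A i0 (vertex i0) = A i0 i0" unfolding A_vec_def vertex_def by (simp add: dl)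
    moreover have "A_avg A (vertex i0) = A_vec A i0 (vertex i0)" unfolding A_avg_def vertex_def by (simp add: dl)
    ultimately show ?thesis by (simp add: replicator_def vec_eq_iff vertex_def)
  qed
  show ?thesis unfolding replicator_attractor_def
    by (rule conjI[OF vertex_simplex conjI[OF eq conjI[OF stab attr]]])
qed


theorem theorem4p7:
  fixes T R P S :: real
    and p :: "'i::finite \<Rightarrow> outcome \<Rightarrow> real"
    and x0 :: "'i \<Rightarrow> real"
    and istar :: 'i
  assumes "PD_payoffs T R P S"
    and "\<And>i. memory_one (p i)"
    and "\<And>i. 0 \<le> x0 i \<and> x0 i \<le> 1"
    and "good T R P S (p istar)"
    and "x0 istar = 1"
    and "\<And>j. j \<noteq> istar \<Longrightarrow> \<not> agreeable (p j)"
  shows "ESS (game_matrix T R P S p x0) istar \<and>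
         replicator_attractor (game_matrix T R P S p x0) (vertex istar)"
proof -
  have ess: "ESS (game_matrix T R P S p x0) istar"
    by (rule ESS_part[of T R P S p x0 istar, OF assms])
  then show ?thesis using attractor_part[OF ess] by simp
qed

end
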